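(* Let $A$ and $B$ be output types of system $\mathcal F$. Then $A\wedge B$, $A\vee B$ and $LA$ are output types.
   Context: $\lambda$-terms are those of the untyped $\lambda$-calculus; $Fv(t)$ the free variables; normal means without $\beta$-redex. Types of system $\mathcal F$: built from type variables and type constants (atomic, not quantifiable; $O$ is one) with $\rightarrow$, $\forall$; only proper types (in every $\forall XA$, $X$ occurs free in $A$). Typing: (ax) $\Gamma \vdash x_i : A_i$ for $x_i:A_i\in\Gamma$; ($\rightarrow_i$) from $\Gamma, x:B \vdash t : C$ infer $\Gamma \vdash \lambda x t : B \rightarrow C$; ($\rightarrow_e$) from $\Gamma \vdash u : B\rightarrow C$, $\Gamma \vdash v : B$ infer $\Gamma \vdash (u)v : C$; ($\forall_i$) from $\Gamma \vdash t : A$, $X$ not free in $\Gamma$, infer $\Gamma \vdash t : \forall X A$; ($\forall_e$) from $\Gamma \vdash t : \forall X A$ infer $\Gamma \vdash t : A[C/X]$. An output type is a closed type $S$ not containing $O$ such that for every normal $t$ and variable $\alpha$, $\alpha:O\vdash_{\mathcal F}t:S$ implies $\alpha\notin Fv(t)$. With $X$ a type variable not free in $A,B$: $A\wedge B=\forall X\{(A\rightarrow(B\rightarrow X))\rightarrow X\}$, $A\vee B=\forall X\{(A\rightarrow X)\rightarrow((B\rightarrow X)\rightarrow X)\}$, $LA=\forall X\{X\rightarrow[(A\rightarrow(X\rightarrow X))\rightarrow X]\}$. *)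

theory Defs
  imports Main
begin

datatype trm = Var nat | Lam nat trm | App trm trm

fun Fv :: "trm \<Rightarrow> nat set" where
  "Fv (Var x) = {x}"
| "Fv (Lam x t) = Fv t - {x}"
| "Fv (App u v) = Fv u \<union> Fv v"

fun normal :: "trm \<Rightarrow> bool" where
  "normal (Var x) = True"
| "normal (Lam x t) = normal t"
| "normal (App u v) = ((\<forall>x t. u \<noteq> Lam x t) \<and> normal u \<and> normal v)"

datatype ty = TVar nat | TConst nat | Arr ty ty | All ty

definition tyO :: ty where "tyO = TConst 0"

fun lift :: "nat \<Rightarrow> ty \<Rightarrow> ty" where
  "lift k (TVar i) = (if i < k then TVar i else TVar (Suc i))"
| "lift k (TConst c) = TConst c"
| "lift k (Arr A B) = Arr (lift k A) (lift k B)"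
| "lift k (All A) = All (lift (Suc k) A)"

fun tsubst :: "nat \<Rightarrow> ty \<Rightarrow> ty \<Rightarrow> ty" where
  "tsubst k C (TVar i) = (if i < k then TVar i else if i = k then C else TVar (i - 1))"
| "tsubst k C (TConst c) = TConst c"
| "tsubst k C (Arr A B) = Arr (tsubst k C A) (tsubst k C B)"
| "tsubst k C (All A) = All (tsubst (Suc k) (lift 0 C) A)"

fun ftv :: "ty \<Rightarrow> nat set" where
  "ftv (TVar i) = {i}"
| "ftv (TConst c) = {}"
| "ftv (Arr A B) = ftv A \<union> ftv B"
| "ftv (All A) = (\<lambda>i. i - 1) ` (ftv A - {0})"

fun proper :: "ty \<Rightarrow> bool" where
  "proper (TVar i) = True"
| "proper (TConst c) = True"
| "proper (Arr A B) = (proper A \<and> proper B)"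
| "proper (All A) = (0 \<in> ftv A \<and> proper A)"

definition closed_ty :: "ty \<Rightarrow> bool" where "closed_ty A \<longleftrightarrow> ftv A = {}"

fun containsO :: "ty \<Rightarrow> bool" where
  "containsO (TVar i) = False"
| "containsO (TConst c) = (TConst c = tyO)"
| "containsO (Arr A B) = (containsO A \<or> containsO B)"
| "containsO (All A) = containsO A"

type_synonym ctx = "nat \<Rightarrow> ty option"

text \<open>Rule (forall_i) "X not free in Gamma" is rendered de Bruijn style: the body is
typed in the context with all free type indices shifted.\<close>
inductive ftyping :: "ctx \<Rightarrow> trm \<Rightarrow> ty \<Rightarrow> bool" where
  ax: "\<Gamma> x = Some A \<Longrightarrow> ftyping \<Gamma> (Var x) A"
| arr_i: "proper B \<Longrightarrow> ftyping (\<Gamma>(x \<mapsto> B)) t C \<Longrightarrow> ftyping \<Gamma> (Lam x t) (Arr B C)"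
| arr_e: "ftyping \<Gamma> u (Arr B C) \<Longrightarrow> ftyping \<Gamma> v B \<Longrightarrow> ftyping \<Gamma> (App u v) C"
| all_i: "ftyping (map_option (lift 0) \<circ> \<Gamma>) t A \<Longrightarrow> 0 \<in> ftv A \<Longrightarrow> ftyping \<Gamma> t (All A)"
| all_e: "ftyping \<Gamma> t (All A) \<Longrightarrow> proper C \<Longrightarrow> ftyping \<Gamma> t (tsubst 0 C A)"

definition output_type :: "ty \<Rightarrow> bool" where
  "output_type S \<longleftrightarrow> proper S \<and> closed_ty S \<and> \<not> containsO S \<and>
     (\<forall>t \<alpha>. normal t \<longrightarrow> ftyping [\<alpha> \<mapsto> tyO] t S \<longrightarrow> \<alpha> \<notin> Fv t)"

section \<open>Connectives (X = bound index 0, A and B lifted past the binder)\<close>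

definition tand :: "ty \<Rightarrow> ty \<Rightarrow> ty" where
  "tand A B = All (Arr (Arr (lift 0 A) (Arr (lift 0 B) (TVar 0))) (TVar 0))"

definition tor :: "ty \<Rightarrow> ty \<Rightarrow> ty" where
  "tor A B = All (Arr (Arr (lift 0 A) (TVar 0)) (Arr (Arr (lift 0 B) (TVar 0)) (TVar 0)))"

definition tlist :: "ty \<Rightarrow> ty" where
  "tlist A = All (Arr (TVar 0) (Arr (Arr (lift 0 A) (Arr (TVar 0) (TVar 0))) (TVar 0)))"

end

theory Submission
  imports Defs
begin

lemma lift_lift: "i \<le> k \<Longrightarrow> lift (Suc k) (lift i t) = lift i (lift k t)"
  by (induct t arbitrary: i k) auto

lemma lift_subst: "j \<le> i \<Longrightarrow> lift i (tsubst j s t) = tsubst j (lift i s) (lift (Suc i) t)"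
  by (induct t arbitrary: i j s) (simp_all add: diff_Suc lift_lift split: nat.split)

lemma lift_subst_lt: "i \<le> j \<Longrightarrow> lift i (tsubst j s t) = tsubst (Suc j) (lift i s) (lift i t)"
  by (induct t arbitrary: i j s) (auto simp: lift_lift)

lemma subst_lift [simp]: "tsubst k s (lift k t) = t"
  by (induct t arbitrary: k s) simp_all

lemma subst_subst:
  "i \<le> j \<Longrightarrow> tsubst i (tsubst j v u) (tsubst (Suc j) (lift i v) t) = tsubst j v (tsubst i u t)"
  by (induct t arbitrary: i j u v)
    (simp_all add: diff_Suc subst_lift lift_lift[symmetric] lift_subst_lt split: nat.split)

lemma lift_closed: "\<forall>i\<in>ftv A. i < k \<Longrightarrow> lift k A = A"
proof (induct A arbitrary: k)
  case (All A)
  have "\<forall>i\<in>ftv A. i < Suc k"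
  proof
    fix i assume "i \<in> ftv A"
    then show "i < Suc k" using All.prems by (cases i) force+
  qed
  then show ?case using All by simp
qed auto

lemma lift_closed0: "ftv A = {} \<Longrightarrow> lift k A = A"
  by (simp add: lift_closed)

lemma ftv_lift_keep: "i < k \<Longrightarrow> i \<in> ftv A \<Longrightarrow> i \<in> ftv (lift k A)"
proof (induct A arbitrary: i k)
  case (All A)
  then obtain j where "j \<in> ftv A" "j \<noteq> 0" "i = j - 1" by auto
  then have "Suc i \<in> ftv A" by (cases j) auto
  then have "Suc i \<in> ftv (lift (Suc k) A)" using All by simp
  then show ?case by force
qed auto

lemma ftv_subst_keep: "i < k \<Longrightarrow> i \<in> ftv A \<Longrightarrow> i \<in> ftv (tsubst k C A)"
proof (induct A arbitrary: i k C)
  case (All A)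
  then obtain j where "j \<in> ftv A" "j \<noteq> 0" "i = j - 1" by auto
  then have "Suc i \<in> ftv A" by (cases j) auto
  then have "Suc i \<in> ftv (tsubst (Suc k) (lift 0 C) A)" using All by simp
  then show ?case by force
qed auto

lemma proper_lift: "proper A \<Longrightarrow> proper (lift k A)"
  by (induct A arbitrary: k) (auto intro: ftv_lift_keep)

lemma proper_subst: "proper A \<Longrightarrow> proper C \<Longrightarrow> proper (tsubst k C A)"
  by (induct A arbitrary: k C) (auto intro: ftv_subst_keep proper_lift)

lemma subst_typing:
  assumes "ftyping \<Delta> t T"
  shows "proper C \<Longrightarrow> ftyping (map_option (tsubst k C) \<circ> \<Delta>) t (tsubst k C T)"
  using assms
proof (induction arbitrary: k C rule: ftyping.induct)
  case (ax \<Gamma> x A)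
  then show ?case by (auto intro: ftyping.ax)
next
  case (arr_i B \<Gamma> x t C')
  have e: "map_option (tsubst k C) \<circ> \<Gamma>(x \<mapsto> B) = (map_option (tsubst k C) \<circ> \<Gamma>)(x \<mapsto> tsubst k C B)"
    by (auto simp: fun_eq_iff)
  have "ftyping (map_option (tsubst k C) \<circ> \<Gamma>(x \<mapsto> B)) t (tsubst k C C')"
    using arr_i.IH arr_i.prems by blast
  then have "ftyping ((map_option (tsubst k C) \<circ> \<Gamma>)(x \<mapsto> tsubst k C B)) t (tsubst k C C')"
    using e by simp
  then show ?case by (simp only: tsubst.simps) (rule ftyping.arr_i[OF proper_subst[OF arr_i(1) arr_i.prems]])
next
  case (arr_e \<Gamma> u B C' v)
  have "ftyping (map_option (tsubst k C) \<circ> \<Gamma>) u (Arr (tsubst k C B) (tsubst k C C'))"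
    using arr_e.IH(1)[OF arr_e.prems] by (simp add: comp_def)
  then show ?case using arr_e.IH(2)[OF arr_e.prems] by (rule ftyping.arr_e)
next
  case (all_i \<Gamma> t A)
  have pc: "proper (lift 0 C)" using all_i by (simp add: proper_lift)
  have e: "map_option (tsubst (Suc k) (lift 0 C)) \<circ> (map_option (lift 0) \<circ> \<Gamma>)
     = map_option (lift 0) \<circ> (map_option (tsubst k C) \<circ> \<Gamma>)"
    by (auto simp: fun_eq_iff option.map_comp lift_subst_lt comp_def intro!: option.map_cong)
  have "ftyping (map_option (lift 0) \<circ> (map_option (tsubst k C) \<circ> \<Gamma>)) t (tsubst (Suc k) (lift 0 C) A)"
    using all_i.IH[OF pc, of "Suc k"] e by (simp add: comp_def)
  moreover have "0 \<in> ftv (tsubst (Suc k) (lift 0 C) A)" using all_i by (simp add: ftv_subst_keep)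
  ultimately have "ftyping (map_option (tsubst k C) \<circ> \<Gamma>) t (All (tsubst (Suc k) (lift 0 C) A))"
    by (rule ftyping.all_i)
  then show ?case by (simp add: comp_def)
next
  case (all_e \<Gamma> t A D k C)
  have "ftyping (map_option (tsubst k C) \<circ> \<Gamma>) t (All (tsubst (Suc k) (lift 0 C) A))"
    using all_e by (simp add: comp_def)
  from ftyping.all_e[OF this proper_subst[OF all_e(2) all_e(4), where k=k]]
  show ?case using subst_subst[of 0 k C D A] by (simp add: comp_def)
qed


lemma all_pow_subst:
  "tsubst k C ((All ^^ m) X) = (All ^^ m) (tsubst (m + k) ((lift 0 ^^ m) C) X)"
proof (induct m arbitrary: k C)
  case (Suc m)
  have e: "(lift 0 ^^ m) (lift 0 C) = (lift 0 ^^ Suc m) C"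
    by (simp only: funpow_Suc_right o_apply)
  show ?case using Suc[of "Suc k" "lift 0 C"] e by simp
qed simp

lemma lift_pow: "(lift 0 ^^ m) (lift 0 D) = lift m ((lift 0 ^^ m) D)"
  by (induct m) (simp_all add: lift_lift[of 0, symmetric])

lemma proper_lift_pow: "proper C \<Longrightarrow> proper ((lift 0 ^^ m) C)"
  by (induct m) (simp_all add: proper_lift)

lemma subst_lift_pow: "tsubst m C' ((lift 0 ^^ Suc m) D) = (lift 0 ^^ m) D"
proof -
  have "(lift 0 ^^ Suc m) D = (lift 0 ^^ m) (lift 0 D)"
    by (simp only: funpow_Suc_right o_apply)
  then show ?thesis by (simp add: lift_pow)
qed

lemma lam_inv:
  assumes "ftyping \<Gamma> s T"
  shows "s = Lam x t \<Longrightarrow> \<exists>n P Q. T = (All ^^ n) (Arr P Q) \<and>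
           ftyping ((map_option (lift 0 ^^ n) \<circ> \<Gamma>)(x \<mapsto> P)) t Q"
  using assms
proof (induction rule: ftyping.induct)
  case (arr_i B \<Gamma> x' t' C)
  have "map_option (lift 0 ^^ 0) \<circ> \<Gamma> = \<Gamma>" by (simp add: fun_eq_iff option.map_id)
  then show ?case using arr_i by (intro exI[of _ 0]) (auto simp: option.map_ident fun_upd_def)
next
  case (all_i \<Gamma> t' A)
  then obtain n P Q where A: "A = (All ^^ n) (Arr P Q)"
    and ty: "ftyping ((map_option (lift 0 ^^ n) \<circ> (map_option (lift 0) \<circ> \<Gamma>))(x \<mapsto> P)) t Q"
    by blast
  have e: "map_option (lift 0 ^^ n) \<circ> (map_option (lift 0) \<circ> \<Gamma>) = map_option (lift 0 ^^ Suc n) \<circ> \<Gamma>"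
    by (simp add: fun_eq_iff option.map_comp funpow_Suc_right del: funpow.simps)
  have t1: "ftyping ((map_option (lift 0 ^^ Suc n) \<circ> \<Gamma>)(x \<mapsto> P)) t Q"
    using ty unfolding e .
  have t2: "All A = (All ^^ Suc n) (Arr P Q)" using A by simp
  show ?case using t1 t2 by blast
next
  case (all_e \<Gamma> t' A C)
  then obtain n P Q where A: "All A = (All ^^ n) (Arr P Q)"
    and ty: "ftyping ((map_option (lift 0 ^^ n) \<circ> \<Gamma>)(x \<mapsto> P)) t Q"
    by blast
  obtain m where n: "n = Suc m" using A by (cases n) auto
  have A': "A = (All ^^ m) (Arr P Q)" using A n by simp
  define C' where "C' = (lift 0 ^^ m) C"
  have pC': "proper C'" unfolding C'_def using all_e by (simp add: proper_lift_pow)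
  have "ftyping (map_option (tsubst m C') \<circ> ((map_option (lift 0 ^^ Suc m) \<circ> \<Gamma>)(x \<mapsto> P))) t (tsubst m C' Q)"
    using subst_typing[OF ty[unfolded n] pC'] .
  moreover have "map_option (tsubst m C') \<circ> ((map_option (lift 0 ^^ Suc m) \<circ> \<Gamma>)(x \<mapsto> P))
     = (map_option (lift 0 ^^ m) \<circ> \<Gamma>)(x \<mapsto> tsubst m C' P)"
    by (auto simp: fun_eq_iff option.map_comp subst_lift_pow comp_def intro!: option.map_cong
             simp del: funpow.simps)
  ultimately have "ftyping ((map_option (lift 0 ^^ m) \<circ> \<Gamma>)(x \<mapsto> tsubst m C' P)) t (tsubst m C' Q)"
    by simp
  moreover have "tsubst 0 C A = (All ^^ m) (Arr (tsubst m C' P) (tsubst m C' Q))"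
    using all_pow_subst[of 0 C m "Arr P Q"] A' C'_def by simp
  ultimately show ?case by blast
qed auto

lemma lam_inv1:
  assumes "ftyping \<Gamma> (Lam x t) (All (Arr P Q))" "proper C"
  shows "ftyping (\<Gamma>(x \<mapsto> tsubst 0 C P)) t (tsubst 0 C Q)"
proof -
  obtain n P' Q' where e: "All (Arr P Q) = (All ^^ n) (Arr P' Q')"
    and ty: "ftyping ((map_option (lift 0 ^^ n) \<circ> \<Gamma>)(x \<mapsto> P')) t Q'"
    using lam_inv[OF assms(1)] by blast
  have n: "n = 1" using e
    by (cases n; cases "n - 1") auto
  then have PQ: "P' = P" "Q' = Q" using e by auto
  have "ftyping (map_option (tsubst 0 C) \<circ> ((map_option (lift 0) \<circ> \<Gamma>)(x \<mapsto> P))) t (tsubst 0 C Q)"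
    using subst_typing[OF ty assms(2), of 0] n PQ by simp
  moreover have "map_option (tsubst 0 C) \<circ> ((map_option (lift 0) \<circ> \<Gamma>)(x \<mapsto> P)) = \<Gamma>(x \<mapsto> tsubst 0 C P)"
    by (auto simp: fun_eq_iff option.map_comp comp_def option.map_ident)
  ultimately show ?thesis by simp
qed

lemma lam_inv0:
  assumes "ftyping \<Gamma> (Lam x t) (Arr P Q)"
  shows "ftyping (\<Gamma>(x \<mapsto> P)) t Q"
proof -
  obtain n P' Q' where e: "Arr P Q = (All ^^ n) (Arr P' Q')"
    and ty: "ftyping ((map_option (lift 0 ^^ n) \<circ> \<Gamma>)(x \<mapsto> P')) t Q'"
    using lam_inv[OF assms(1)] by blast
  have n: "n = 0" using e by (cases n) auto
  have e0: "map_option (lift 0 ^^ 0) \<circ> \<Gamma> = \<Gamma>" by (rule ext) (simp add: option.map_id)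
  have "P' = P" "Q' = Q" using e n by auto
  then show ?thesis using ty unfolding n e0 by simp
qed

lemma lam_not_const: "ftyping \<Gamma> (Lam x t) (TConst c) \<Longrightarrow> False"
proof -
  assume "ftyping \<Gamma> (Lam x t) (TConst c)"
  then obtain n P Q where e: "TConst c = (All ^^ n) (Arr P Q)"
    using lam_inv by blast
  then show False by (cases n) auto
qed


fun head :: "trm \<Rightarrow> trm" where
  "head (App u v) = head u"
| "head (Var x) = Var x"
| "head (Lam x t) = Lam x t"

fun args :: "trm \<Rightarrow> trm list" where
  "args (App u v) = args u @ [v]"
| "args (Var x) = []"
| "args (Lam x t) = []"

fun arrs :: "ty list \<Rightarrow> ty \<Rightarrow> ty" where
  "arrs [] R = R"
| "arrs (A # As) R = Arr A (arrs As R)"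

fun allv :: "trm \<Rightarrow> nat set" where
  "allv (Var x) = {x}"
| "allv (Lam x t) = insert x (allv t)"
| "allv (App u v) = allv u \<union> allv v"

fun lams :: "nat \<Rightarrow> nat \<Rightarrow> trm" where
  "lams 0 b = Var b"
| "lams (Suc k) b = Lam (Suc b) (lams k b)"

lemma finite_allv: "finite (allv t)"
  by (induct t) auto

lemma arrs_not_all: "arrs Ds (TConst c) \<noteq> All E"
  by (cases Ds) auto

lemma ftv_arrs_drop: "ftv (arrs (drop m As) R) \<subseteq> ftv (arrs As R)"
proof (induct As arbitrary: m)
  case (Cons a As)
  then show ?case by (cases m) auto
qed simp

lemma spine_typing:
  assumes "ftyping \<Gamma> s T"
  shows "head s = Var x \<Longrightarrow> \<Gamma> x = Some (arrs As (TConst c)) \<Longrightarrow> ftv (arrs As (TConst c)) = {} \<Longrightarrow>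
    length (args s) \<le> length As \<and> T = arrs (drop (length (args s)) As) (TConst c) \<and>
    (\<forall>i<length (args s). ftyping \<Gamma> (args s ! i) (As ! i))"
  using assms
proof (induction rule: ftyping.induct)
  case (arr_e \<Gamma> u B C v)
  define m where "m = length (args u)"
  from arr_e have IH: "m \<le> length As" "Arr B C = arrs (drop m As) (TConst c)"
    "\<forall>i<m. ftyping \<Gamma> (args u ! i) (As ! i)" by (auto simp: m_def)
  obtain E Es where dr: "drop m As = E # Es" using IH(2) by (cases "drop m As") auto
  then have ml: "m < length As" by (metis drop_all list.distinct(1) not_le)
  from Cons_nth_drop_Suc[OF ml] dr have "As ! m = E" "drop (Suc m) As = Es" by auto
  moreover have "B = E" "C = arrs Es (TConst c)" using IH(2) dr by auto
  ultimately show ?case using IH ml arr_e.hyps(2)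
    by (auto simp: m_def[symmetric] nth_append less_Suc_eq)
next
  case (all_i \<Gamma> t A)
  have "(map_option (lift 0) \<circ> \<Gamma>) x = Some (arrs As (TConst c))"
    using all_i.prems by (simp add: lift_closed0)
  then have "A = arrs (drop (length (args t)) As) (TConst c)" using all_i by blast
  then have "ftv A = {}" using ftv_arrs_drop[of "length (args t)" As "TConst c"] all_i.prems by auto
  then show ?case using all_i by auto
next
  case (all_e \<Gamma> t A C)
  then show ?case using arrs_not_all by metis
qed auto

lemma head_bound:
  assumes "ftyping \<Gamma> s T"
  shows "head s = Var x \<Longrightarrow> \<Gamma> x \<noteq> None"
  using assms by (induction rule: ftyping.induct) auto

lemma head_var: "normal s \<Longrightarrow> (\<forall>y t. s \<noteq> Lam y t) \<Longrightarrow> \<exists>x. head s = Var x"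
  by (induct s) auto

lemma Fv_spine: "Fv s = Fv (head s) \<union> (\<Union>a\<in>set (args s). Fv a)"
  by (induct s) auto

lemma args_normal: "normal s \<Longrightarrow> a \<in> set (args s) \<Longrightarrow> normal a"
  by (induct s) auto

lemma args_size: "a \<in> set (args s) \<Longrightarrow> size a < size s"
  by (induct s) auto

section \<open>Replacement\<close>

definition repl :: "(nat \<Rightarrow> nat option) \<Rightarrow> trm \<Rightarrow> nat option" where
  "repl \<rho> u = (case head u of Var x \<Rightarrow> \<rho> x | _ \<Rightarrow> None)"

fun S :: "(nat \<Rightarrow> nat option) \<Rightarrow> nat \<Rightarrow> trm \<Rightarrow> trm" where
  "S \<rho> b (Var x) = (case \<rho> x of Some k \<Rightarrow> lams k b | None \<Rightarrow> Var x)"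
| "S \<rho> b (Lam x t) = Lam x (S (\<rho>(x := None)) b t)"
| "S \<rho> b (App u v) = (case repl \<rho> u of
      Some k \<Rightarrow> (if k \<le> Suc (length (args u)) then Var b else lams (k - Suc (length (args u))) b)
    | None \<Rightarrow> App (S \<rho> b u) (S \<rho> b v))"

lemma lams_typing:
  "\<Gamma> b = Some tyO \<Longrightarrow> \<forall>A\<in>set As. proper A \<Longrightarrow> ftyping \<Gamma> (lams (length As) b) (arrs As tyO)"
proof (induct As arbitrary: \<Gamma>)
  case Nil
  then show ?case by (auto intro: ftyping.ax)
next
  case (Cons A As)
  have "ftyping (\<Gamma>(Suc b \<mapsto> A)) (lams (length As) b) (arrs As tyO)"
    using Cons by auto
  then show ?case using Cons.prems by (auto intro: ftyping.arr_i)
qed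

lemma lams_Fv: "Fv (lams k b) = {b}"
  by (induct k) auto

lemma lams_normal: "normal (lams k b)"
  by (induct k) auto

lemma S_typing:
  assumes "ftyping \<Gamma> t D"
  shows "b \<notin> allv t \<Longrightarrow>
    (\<forall>x k. \<rho> x = Some k \<longrightarrow> (\<exists>As. \<Gamma> x = Some (arrs As tyO) \<and> length As = k \<and>
        ftv (arrs As tyO) = {} \<and> (\<forall>A\<in>set As. proper A))) \<Longrightarrow>
    \<Gamma>' b = Some tyO \<Longrightarrow> (\<forall>x. x \<noteq> b \<longrightarrow> \<rho> x = None \<longrightarrow> \<Gamma>' x = \<Gamma> x) \<Longrightarrow>
    ftyping \<Gamma>' (S \<rho> b t) D"
  using assms
proof (induction arbitrary: \<rho> \<Gamma>' rule: ftyping.induct)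
  case (ax \<Gamma> x A \<rho> \<Gamma>')
  show ?case
  proof (cases "\<rho> x")
    case None
    then show ?thesis using ax by (auto intro: ftyping.ax)
  next
    case (Some k)
    then obtain As where "\<Gamma> x = Some (arrs As tyO)" "length As = k" "\<forall>A\<in>set As. proper A"
      using ax by blast
    then show ?thesis using ax Some lams_typing[of \<Gamma>' b As] by auto
  qed
next
  case (arr_i B \<Gamma> x t C \<rho> \<Gamma>')
  have "ftyping (\<Gamma>'(x \<mapsto> B)) (S (\<rho>(x := None)) b t) C"
  proof (rule arr_i.IH)
    show "b \<notin> allv t" using arr_i by simp
    show "\<forall>y k. (\<rho>(x := None)) y = Some k \<longrightarrow> (\<exists>As. (\<Gamma>(x \<mapsto> B)) y = Some (arrs As tyO) \<and> length As = k \<and>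
        ftv (arrs As tyO) = {} \<and> (\<forall>A\<in>set As. proper A))" using arr_i.prems(2) by auto
    show "(\<Gamma>'(x \<mapsto> B)) b = Some tyO" using arr_i.prems by auto
    show "\<forall>y. y \<noteq> b \<longrightarrow> (\<rho>(x := None)) y = None \<longrightarrow> (\<Gamma>'(x \<mapsto> B)) y = (\<Gamma>(x \<mapsto> B)) y"
      using arr_i.prems(4) by auto
  qed
  then show ?case using arr_i by (auto intro: ftyping.arr_i)
next
  case (arr_e \<Gamma> u B C v \<rho> \<Gamma>')
  show ?case
  proof (cases "repl \<rho> u")
    case None
    have "ftyping \<Gamma>' (S \<rho> b u) (Arr B C)" using arr_e by auto
    moreover have "ftyping \<Gamma>' (S \<rho> b v) B" using arr_e by auto
    ultimately show ?thesis using None by (auto intro: ftyping.arr_e)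
  next
    case (Some k)
    then obtain y where hy: "head u = Var y" "\<rho> y = Some k"
      unfolding repl_def by (auto split: trm.splits)
    then obtain As where As: "\<Gamma> y = Some (arrs As tyO)" "length As = k" "ftv (arrs As tyO) = {}"
      "\<forall>A\<in>set As. proper A"
      using arr_e.prems by blast
    define m where "m = length (args u)"
    have st: "Arr B C = arrs (drop m As) tyO"
      using spine_typing[OF arr_e.hyps(1) hy(1), of As 0] As unfolding m_def tyO_def by auto
    obtain E Es where dr: "drop m As = E # Es" using st by (cases "drop m As") (auto simp: tyO_def)
    then have ml: "m < length As" by (metis drop_all list.distinct(1) not_le)
    from Cons_nth_drop_Suc[OF ml] dr have Es: "drop (Suc m) As = Es" by auto
    have C: "C = arrs Es tyO" using st dr by auto
    show ?thesis
    proof (cases "k \<le> Suc m")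
      case True
      then have "Es = []" using Es As(2) by auto
      then show ?thesis using True Some C arr_e.prems unfolding m_def by (auto intro: ftyping.ax)
    next
      case False
      have "length Es = k - Suc m" using Es As(2) by auto
      moreover have "\<forall>A\<in>set Es. proper A" using As(4) Es by (metis in_set_dropD)
      ultimately have "ftyping \<Gamma>' (lams (k - Suc m) b) C"
        using lams_typing[of \<Gamma>' b Es] arr_e.prems C by auto
      then show ?thesis using False Some unfolding m_def by auto
    qed
  qed
next
  case (all_i \<Gamma> t A \<rho> \<Gamma>')
  have "ftyping (map_option (lift 0) \<circ> \<Gamma>') (S \<rho> b t) A"
  proof (rule all_i.IH)
    show "b \<notin> allv t" using all_i by simp
    show "\<forall>x k. \<rho> x = Some k \<longrightarrow> (\<exists>As. (map_option (lift 0) \<circ> \<Gamma>) x = Some (arrs As tyO) \<and> length As = k \<and>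
        ftv (arrs As tyO) = {} \<and> (\<forall>A\<in>set As. proper A))" using all_i.prems(2)
      by (fastforce simp: lift_closed0)
    show "(map_option (lift 0) \<circ> \<Gamma>') b = Some tyO" using all_i.prems by (simp add: tyO_def)
    show "\<forall>x. x \<noteq> b \<longrightarrow> \<rho> x = None \<longrightarrow> (map_option (lift 0) \<circ> \<Gamma>') x = (map_option (lift 0) \<circ> \<Gamma>) x"
      using all_i.prems(4) by auto
  qed
  then show ?case using all_i by (auto intro: ftyping.all_i)
next
  case (all_e \<Gamma> t A C \<rho> \<Gamma>')
  then show ?case by (auto intro: ftyping.all_e)
qed

lemma S_lam: "S \<rho> b u = Lam y s \<Longrightarrow> (\<exists>x t. u = Lam x t) \<or> repl \<rho> u \<noteq> None"
  by (cases u) (auto simp: repl_def split: option.splits if_splits)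

lemma S_normal: "normal t \<Longrightarrow> normal (S \<rho> b t)"
proof (induct t arbitrary: \<rho>)
  case (Var x)
  then show ?case by (auto simp: lams_normal split: option.splits)
next
  case (Lam x t)
  then show ?case by auto
next
  case (App u v)
  show ?case
  proof (cases "repl \<rho> u")
    case None
    then have "\<forall>y s. S \<rho> b u \<noteq> Lam y s" using App.prems S_lam by fastforce
    then show ?thesis using None App by auto
  next
    case (Some k)
    then show ?thesis by (auto simp: lams_normal)
  qed
qed

lemma S_Fv: "\<rho> x = Some k \<Longrightarrow> x \<in> Fv t \<Longrightarrow> b \<notin> allv t \<Longrightarrow> b \<in> Fv (S \<rho> b t)"
proof (induct t arbitrary: \<rho>)
  case (App u v)
  then show ?case by (auto simp: lams_Fv split: option.splits)
qed (auto simp: lams_Fv)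

lemma out_lemma:
  assumes "output_type A" "normal u"
    "ftyping (map_option (\<lambda>As. arrs As tyO) \<circ> \<Phi>) u A" "\<Phi> \<alpha> = Some []"
    "\<forall>x As. \<Phi> x = Some As \<longrightarrow> ftv (arrs As tyO) = {} \<and> (\<forall>A\<in>set As. proper A)"
  shows "\<alpha> \<notin> Fv u"
proof
  assume a: "\<alpha> \<in> Fv u"
  obtain b where b: "b \<notin> allv u"
    using finite_allv ex_new_if_finite infinite_UNIV_nat by blast
  define \<rho> where "\<rho> = map_option length \<circ> \<Phi>"
  have "ftyping [b \<mapsto> tyO] (S \<rho> b u) A"
  proof (rule S_typing[OF assms(3) b])
    show "\<forall>x k. \<rho> x = Some k \<longrightarrow> (\<exists>As. (map_option (\<lambda>As. arrs As tyO) \<circ> \<Phi>) x = Some (arrs As tyO) \<and>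
        length As = k \<and> ftv (arrs As tyO) = {} \<and> (\<forall>A\<in>set As. proper A))"
      using assms(5) by (auto simp: \<rho>_def)
    show "[b \<mapsto> tyO] b = Some tyO" by simp
    show "\<forall>x. x \<noteq> b \<longrightarrow> \<rho> x = None \<longrightarrow> [b \<mapsto> tyO] x = (map_option (\<lambda>As. arrs As tyO) \<circ> \<Phi>) x"
      by (auto simp: \<rho>_def)
  qed
  moreover have "normal (S \<rho> b u)" using S_normal assms(2) by blast
  ultimately have "b \<notin> Fv (S \<rho> b u)" using assms(1) unfolding output_type_def by blast
  moreover have "\<rho> \<alpha> = Some 0" using assms(4) by (simp add: \<rho>_def)
  ultimately show False using S_Fv a b by blast
qed


lemma tsubst_closed: "ftv A = {} \<Longrightarrow> tsubst k C A = A"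
  by (metis lift_closed0 subst_lift)

lemma out_facts: "output_type A \<Longrightarrow> proper A \<and> ftv A = {} \<and> \<not> containsO A"
  by (simp add: output_type_def closed_ty_def)

lemma arrs_eq_self: "arrs Ds R = R \<Longrightarrow> Ds = []"
proof -
  assume "arrs Ds R = R"
  then have "size (arrs Ds R) = size R" by simp
  moreover have "Ds \<noteq> [] \<Longrightarrow> size (arrs Ds R) > size R"
    by (induct Ds) (auto, case_tac Ds, auto)
  ultimately show ?thesis by fastforce
qed

lemma ftv_arrs: "ftv (arrs As R) = (\<Union>A\<in>set As. ftv A) \<union> ftv R"
  by (induct As) auto

lemma proper_arrs: "proper (arrs As R) = ((\<forall>A\<in>set As. proper A) \<and> proper R)"
  by (induct As) auto

lemma top_lam:
  assumes "normal t" "ftyping [\<alpha> \<mapsto> tyO] t (All E)"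
  shows "\<exists>x t'. t = Lam x t'"
proof (rule ccontr)
  assume nl: "\<not> (\<exists>x t'. t = Lam x t')"
  then obtain y where hy: "head t = Var y" using head_var assms(1) by blast
  then have "y = \<alpha>" using head_bound[OF assms(2) hy] by (auto split: if_splits)
  then have "[\<alpha> \<mapsto> tyO] y = Some (arrs [] (TConst 0))" by (simp add: tyO_def)
  from spine_typing[OF assms(2) hy this] show False using arrs_not_all by auto
qed

lemma finish:
  assumes "normal s" "ftyping (map_option (\<lambda>As. arrs As tyO) \<circ> \<Phi>) s T" "head s = Var y"
    "y \<noteq> \<alpha>" "\<Phi> \<alpha> = Some []" "\<Phi> y = Some As" "\<forall>A\<in>set As. output_type A"
    "\<forall>x As. \<Phi> x = Some As \<longrightarrow> ftv (arrs As tyO) = {} \<and> (\<forall>A\<in>set As. proper A)"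
  shows "\<alpha> \<notin> Fv s"
proof -
  have ty: "(map_option (\<lambda>As. arrs As tyO) \<circ> \<Phi>) y = Some (arrs As (TConst 0))"
    using assms(6) by (simp add: tyO_def)
  have cl: "ftv (arrs As (TConst 0)) = {}" using assms(6,8) by (simp add: tyO_def)
  from spine_typing[OF assms(2,3) ty cl]
  have len: "length (args s) \<le> length As"
    and at: "\<forall>i<length (args s). ftyping (map_option (\<lambda>As. arrs As tyO) \<circ> \<Phi>) (args s ! i) (As ! i)"
    by (auto simp: comp_def)
  have "\<forall>a\<in>set (args s). \<alpha> \<notin> Fv a"
  proof
    fix a assume "a \<in> set (args s)"
    then obtain i where i: "i < length (args s)" "a = args s ! i" by (metis in_set_conv_nth)
    have "output_type (As ! i)" using assms(7) len i by auto
    moreover have "normal a" using args_normal assms(1) i by auto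
    ultimately show "\<alpha> \<notin> Fv a" using out_lemma[OF _ _ _ assms(5,8)] at i by blast
  qed
  then show ?thesis using Fv_spine[of s] assms(3,4) by auto
qed

abbreviation K :: ty where "K \<equiv> TConst 1"

lemma tand_out:
  assumes oA: "output_type A" and oB: "output_type B"
  shows "output_type (tand A B)"
proof -
  have fA: "proper A" "ftv A = {}" "\<not> containsO A" using out_facts[OF oA] by auto
  have fB: "proper B" "ftv B = {}" "\<not> containsO B" using out_facts[OF oB] by auto
  have T: "tand A B = All (Arr (Arr A (Arr B (TVar 0))) (TVar 0))"
    unfolding tand_def using fA fB by (simp add: lift_closed0)
  have basic: "proper (tand A B) \<and> closed_ty (tand A B) \<and> \<not> containsO (tand A B)"
    unfolding T closed_ty_def using fA fB by (auto simp: tyO_def)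
  have main: "\<alpha> \<notin> Fv t" if nt: "normal t" and ty: "ftyping [\<alpha> \<mapsto> tyO] t (tand A B)" for t \<alpha>
  proof -
    obtain f t' where t: "t = Lam f t'" using top_lam[OF nt] ty T by metis
    show ?thesis
    proof (cases "f = \<alpha>")
      case True then show ?thesis using t by simp
    next
      case False
      have tyC: "ftyping ([\<alpha> \<mapsto> tyO](f \<mapsto> Arr A (Arr B C))) t' C" if "proper C" for C
        using lam_inv1[OF ty[unfolded t T] that] fA fB by (simp add: tsubst_closed)
      have nt': "normal t'" using nt t by simp
      have nl: "\<forall>y s. t' \<noteq> Lam y s"
        using tyC[of K] lam_not_const by auto
      obtain y where hy: "head t' = Var y" using head_var nt' nl by blast
      have tyK: "ftyping ([\<alpha> \<mapsto> tyO](f \<mapsto> Arr A (Arr B K))) t' K" using tyC by simp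
      have "y \<noteq> \<alpha>"
      proof
        assume "y = \<alpha>"
        then have "([\<alpha> \<mapsto> tyO](f \<mapsto> Arr A (Arr B K))) y = Some (arrs [] (TConst 0))"
          using False by (simp add: tyO_def)
        from spine_typing[OF tyK hy this] show False by simp
      qed
      then have yf: "y = f" using head_bound[OF tyK hy] by (auto split: if_splits)
      define \<Phi> where "\<Phi> = [\<alpha> \<mapsto> ([]::ty list), f \<mapsto> [A, B]]"
      have e: "[\<alpha> \<mapsto> tyO](f \<mapsto> Arr A (Arr B tyO)) = map_option (\<lambda>As. arrs As tyO) \<circ> \<Phi>"
        by (auto simp: \<Phi>_def fun_eq_iff)
      have tyO': "ftyping (map_option (\<lambda>As. arrs As tyO) \<circ> \<Phi>) t' tyO"
        using tyC[of tyO] e by (simp add: tyO_def)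
      have "\<alpha> \<notin> Fv t'"
      proof (rule finish[OF nt' tyO' hy \<open>y \<noteq> \<alpha>\<close>])
        show "\<Phi> \<alpha> = Some []" using False by (simp add: \<Phi>_def)
        show "\<Phi> y = Some [A, B]" using yf by (simp add: \<Phi>_def)
        show "\<forall>A\<in>set [A, B]. output_type A" using oA oB by simp
        show "\<forall>x As. \<Phi> x = Some As \<longrightarrow> ftv (arrs As tyO) = {} \<and> (\<forall>A\<in>set As. proper A)"
          using fA fB by (auto simp: \<Phi>_def tyO_def)
      qed
      then show ?thesis using t by simp
    qed
  qed
  show ?thesis using basic main unfolding output_type_def by blast
qed

lemma tor_out:
  assumes oA: "output_type A" and oB: "output_type B"
  shows "output_type (tor A B)"
proof -
  have fA: "proper A" "ftv A = {}" "\<not> containsO A" using out_facts[OF oA] by auto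
  have fB: "proper B" "ftv B = {}" "\<not> containsO B" using out_facts[OF oB] by auto
  have T: "tor A B = All (Arr (Arr A (TVar 0)) (Arr (Arr B (TVar 0)) (TVar 0)))"
    unfolding tor_def using fA fB by (simp add: lift_closed0)
  have basic: "proper (tor A B) \<and> closed_ty (tor A B) \<and> \<not> containsO (tor A B)"
    unfolding T closed_ty_def using fA fB by (auto simp: tyO_def)
  have main: "\<alpha> \<notin> Fv t" if nt: "normal t" and ty: "ftyping [\<alpha> \<mapsto> tyO] t (tor A B)" for t \<alpha>
  proof -
    obtain g t1 where t: "t = Lam g t1" using top_lam[OF nt] ty T by metis
    show ?thesis
    proof (cases "g = \<alpha>")
      case True then show ?thesis using t by simp
    next
      case False
      have tyC: "ftyping ([\<alpha> \<mapsto> tyO](g \<mapsto> Arr A C)) t1 (Arr (Arr B C) C)" if "proper C" for C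
        using lam_inv1[OF ty[unfolded t T] that] fA fB by (simp add: tsubst_closed)
      have nt1: "normal t1" using nt t by simp
      have tyO1: "ftyping ([\<alpha> \<mapsto> tyO](g \<mapsto> Arr A tyO)) t1 (Arr (Arr B tyO) tyO)"
        using tyC by (simp add: tyO_def)
      have "\<exists>h t2. t1 = Lam h t2"
      proof (rule ccontr)
        assume nl: "\<not> (\<exists>h t2. t1 = Lam h t2)"
        then obtain y where hy: "head t1 = Var y" using head_var nt1 by blast
        have "y = \<alpha> \<or> y = g" using head_bound[OF tyO1 hy] by (auto split: if_splits)
        then show False
        proof
          assume "y = \<alpha>"
          then have "([\<alpha> \<mapsto> tyO](g \<mapsto> Arr A tyO)) y = Some (arrs [] (TConst 0))"
            using False by (simp add: tyO_def)
          from spine_typing[OF tyO1 hy this] show False by simp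
        next
          assume "y = g"
          then have "([\<alpha> \<mapsto> tyO](g \<mapsto> Arr A tyO)) y = Some (arrs [A] (TConst 0))"
            by (simp add: tyO_def)
          from spine_typing[OF tyO1 hy this] fA
          have "length (args t1) \<le> 1" "Arr (Arr B tyO) tyO = arrs (drop (length (args t1)) [A]) (TConst 0)"
            by auto
          then have "A = Arr B tyO" by (cases "length (args t1)") (auto simp: tyO_def)
          then show False using fA by (simp add: tyO_def)
        qed
      qed
      then obtain h t2 where t1: "t1 = Lam h t2" by blast
      show ?thesis
      proof (cases "h = \<alpha>")
        case True then show ?thesis using t t1 by simp
      next
        case False2: False
        have tyC2: "ftyping ([\<alpha> \<mapsto> tyO](g \<mapsto> Arr A C, h \<mapsto> Arr B C)) t2 C" if "proper C" for C
          using lam_inv0 tyC[OF that] t1 by blast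
        have nt2: "normal t2" using nt t t1 by simp
        have nl: "\<forall>y s. t2 \<noteq> Lam y s"
          using tyC2[of K] lam_not_const by auto
        obtain y where hy: "head t2 = Var y" using head_var nt2 nl by blast
        have tyK: "ftyping ([\<alpha> \<mapsto> tyO](g \<mapsto> Arr A K, h \<mapsto> Arr B K)) t2 K" using tyC2 by simp
        have "y \<noteq> \<alpha>"
        proof
          assume "y = \<alpha>"
          then have "([\<alpha> \<mapsto> tyO](g \<mapsto> Arr A K, h \<mapsto> Arr B K)) y = Some (arrs [] (TConst 0))"
            using False False2 by (simp add: tyO_def)
          from spine_typing[OF tyK hy this] show False by simp
        qed
        define \<Phi> where "\<Phi> = [\<alpha> \<mapsto> ([]::ty list), g \<mapsto> [A], h \<mapsto> [B]]"
        have e: "[\<alpha> \<mapsto> tyO](g \<mapsto> Arr A tyO, h \<mapsto> Arr B tyO) = map_option (\<lambda>As. arrs As tyO) \<circ> \<Phi>"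
          by (auto simp: \<Phi>_def fun_eq_iff)
        have tyO2: "ftyping (map_option (\<lambda>As. arrs As tyO) \<circ> \<Phi>) t2 tyO"
          using tyC2[of tyO] e by (simp add: tyO_def)
        obtain As where As: "\<Phi> y = Some As" using head_bound[OF tyO2 hy] by auto
        have "\<alpha> \<notin> Fv t2"
        proof (rule finish[OF nt2 tyO2 hy \<open>y \<noteq> \<alpha>\<close> _ As])
          show "\<Phi> \<alpha> = Some []" using False False2 by (simp add: \<Phi>_def)
          show "\<forall>A\<in>set As. output_type A" using oA oB As by (auto simp: \<Phi>_def split: if_splits)
          show "\<forall>x As. \<Phi> x = Some As \<longrightarrow> ftv (arrs As tyO) = {} \<and> (\<forall>A\<in>set As. proper A)"
            using fA fB by (auto simp: \<Phi>_def tyO_def)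
        qed
        then show ?thesis using t t1 by simp
      qed
    qed
  qed
  show ?thesis using basic main unfolding output_type_def by blast
qed

lemma tlist_out:
  assumes oA: "output_type A"
  shows "output_type (tlist A)"
proof -
  have fA: "proper A" "ftv A = {}" "\<not> containsO A" using out_facts[OF oA] by auto
  have T: "tlist A = All (Arr (TVar 0) (Arr (Arr A (Arr (TVar 0) (TVar 0))) (TVar 0)))"
    unfolding tlist_def using fA by (simp add: lift_closed0)
  have basic: "proper (tlist A) \<and> closed_ty (tlist A) \<and> \<not> containsO (tlist A)"
    unfolding T closed_ty_def using fA by (auto simp: tyO_def)
  have main: "\<alpha> \<notin> Fv t" if nt: "normal t" and ty: "ftyping [\<alpha> \<mapsto> tyO] t (tlist A)" for t \<alpha>
  proof -
    obtain x t1 where t: "t = Lam x t1" using top_lam[OF nt] ty T by metis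
    show ?thesis
    proof (cases "x = \<alpha>")
      case True then show ?thesis using t by simp
    next
      case False
      have tyC: "ftyping ([\<alpha> \<mapsto> tyO](x \<mapsto> C)) t1 (Arr (Arr A (Arr C C)) C)" if "proper C" for C
        using lam_inv1[OF ty[unfolded t T] that] fA by (simp add: tsubst_closed)
      have nt1: "normal t1" using nt t by simp
      have tyO1: "ftyping ([\<alpha> \<mapsto> tyO](x \<mapsto> tyO)) t1 (Arr (Arr A (Arr tyO tyO)) tyO)"
        using tyC by (simp add: tyO_def)
      have "\<exists>c t2. t1 = Lam c t2"
      proof (rule ccontr)
        assume nl: "\<not> (\<exists>c t2. t1 = Lam c t2)"
        then obtain y where hy: "head t1 = Var y" using head_var nt1 by blast
        have "([\<alpha> \<mapsto> tyO](x \<mapsto> tyO)) y = Some (arrs [] (TConst 0))"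
          using head_bound[OF tyO1 hy] by (auto simp: tyO_def split: if_splits)
        from spine_typing[OF tyO1 hy this] show False by (simp add: tyO_def)
      qed
      then obtain c t2 where t1: "t1 = Lam c t2" by blast
      show ?thesis
      proof (cases "c = \<alpha>")
        case True then show ?thesis using t t1 by simp
      next
        case False2: False
        define \<Gamma> where "\<Gamma> C = [\<alpha> \<mapsto> tyO](x \<mapsto> C, c \<mapsto> Arr A (Arr C C))" for C
        have tyC2: "ftyping (\<Gamma> C) t2 C" if "proper C" for C
          using lam_inv0 tyC[OF that] t1 unfolding \<Gamma>_def by blast
        define \<Phi> where "\<Phi> = [\<alpha> \<mapsto> ([]::ty list), x \<mapsto> [], c \<mapsto> [A, tyO]]"
        have e: "\<Gamma> tyO = map_option (\<lambda>As. arrs As tyO) \<circ> \<Phi>"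
          by (auto simp: \<Phi>_def \<Gamma>_def fun_eq_iff)
        have \<Phi>ok: "\<forall>x As. \<Phi> x = Some As \<longrightarrow> ftv (arrs As tyO) = {} \<and> (\<forall>A\<in>set As. proper A)"
          using fA by (auto simp: \<Phi>_def tyO_def)
        have \<Phi>a: "\<Phi> \<alpha> = Some []" using False False2 by (simp add: \<Phi>_def)
        have claim: "normal s \<Longrightarrow> ftyping (\<Gamma> K) s K \<Longrightarrow> ftyping (\<Gamma> tyO) s tyO \<Longrightarrow> \<alpha> \<notin> Fv s" for s
        proof (induction s rule: measure_induct_rule[of size])
          case (less s)
          have nl: "\<forall>y u. s \<noteq> Lam y u" using less.prems(2) lam_not_const by auto
          obtain y where hy: "head s = Var y" using head_var less.prems(1) nl by blast
          have "y \<noteq> \<alpha>"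
          proof
            assume "y = \<alpha>"
            then have "\<Gamma> K y = Some (arrs [] (TConst 0))"
              using False False2 by (simp add: tyO_def \<Gamma>_def)
            from spine_typing[OF less.prems(2) hy this] show False by simp
          qed
          have "y = c \<or> (y = x \<and> y \<noteq> c)"
            using head_bound[OF less.prems(2) hy] \<open>y \<noteq> \<alpha>\<close> by (auto simp: \<Gamma>_def split: if_splits)
          then show ?case
          proof
            assume yx: "y = x \<and> y \<noteq> c"
            then have "\<Gamma> K y = Some (arrs [] (TConst 1))" by (simp add: \<Gamma>_def)
            from spine_typing[OF less.prems(2) hy this] have "args s = []" by simp
            then show ?thesis using Fv_spine[of s] hy \<open>y \<noteq> \<alpha>\<close> by simp
          next
            assume yc: "y = c"
            then have "\<Gamma> K y = Some (arrs [A, K] (TConst 1))" by (simp add: \<Gamma>_def)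
            from spine_typing[OF less.prems(2) hy this] fA
            have k1: "length (args s) \<le> 2" "K = arrs (drop (length (args s)) [A, K]) (TConst 1)"
              "\<forall>i<length (args s). ftyping (\<Gamma> K) (args s ! i) ([A, K] ! i)"
              by auto
            have l2: "length (args s) = 2"
              using k1(1) arrs_eq_self[OF k1(2)[symmetric]] by auto
            have "\<Gamma> tyO y = Some (arrs [A, tyO] (TConst 0))" using yc by (simp add: \<Gamma>_def tyO_def)
            from spine_typing[OF less.prems(3) hy this] fA
            have o1: "\<forall>i<length (args s). ftyping (\<Gamma> tyO) (args s ! i) ([A, tyO] ! i)"
              by (auto simp: tyO_def)
            obtain a0 a1 where as: "args s = [a0, a1]" using l2
              by (cases "args s"; cases "tl (args s)") auto
            have n0: "normal a0" "normal a1" using args_normal[OF less.prems(1)] as by auto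
            have "ftyping (map_option (\<lambda>As. arrs As tyO) \<circ> \<Phi>) a0 A" using o1 as e by force
            then have f0: "\<alpha> \<notin> Fv a0" using out_lemma[OF oA n0(1) _ \<Phi>a \<Phi>ok] by blast
            have "size a1 < size s" using args_size as by auto
            moreover have "ftyping (\<Gamma> K) a1 K" "ftyping (\<Gamma> tyO) a1 tyO" using k1(3) o1 as by force+
            ultimately have f1: "\<alpha> \<notin> Fv a1" using less.IH n0(2) by blast
            show ?thesis using Fv_spine[of s] hy \<open>y \<noteq> \<alpha>\<close> as f0 f1 by auto
          qed
        qed
        have "\<alpha> \<notin> Fv t2"
          using claim[OF _ tyC2[of K] tyC2[of tyO]] nt t t1 by (simp add: tyO_def)
        then show ?thesis using t t1 by simp
      qed
    qed
  qed
  show ?thesis using basic main unfolding output_type_def by blast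
qed

theorem corollary2p1p5:
  assumes "output_type A" and "output_type B"
  shows "output_type (tand A B) \<and> output_type (tor A B) \<and> output_type (tlist A)"
  using assms tand_out tor_out tlist_out by blast

end
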